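(* Let $w\colon E\to(0,\infty)$ be a weight function on the edges of the hypercube graph, let $v$ be a game on $N$, and for each $i\in N$ let $v_{i,w}\in\ell^2(V)$ be the unique function with $v_{i,w}(\emptyset)=0$ and $\mathrm{d}v_{i,w} = P_w\mathrm{d}_i v$. Then: (a) $\sum_{i\in N} v_{i,w} = v$. (b) If $v(S\cup\{i\})-v(S)=0$ for all $S\subset N\setminus\{i\}$, then $v_{i,w}=0$. (c) If $\sigma$ is a permutation of $N$, then $(\sigma^*v)_{i,\sigma^*w} = \sigma^*(v_{\sigma(i),w})$ for all $i\in N$. In particular, if $\sigma$ swaps $i$ and $j$, $\sigma^*v=v$ and $\sigma^*w=w$, then $v_{i,w}=\sigma^*(v_{j,w})$. (d) For any two games $v,v'$ and $\alpha,\alpha'\in\mathbb{R}$, $(\alpha v+\alpha' v')_{i,w} = \alpha v_{i,w}+\alpha' v'_{i,w}$.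
   Context: Let $N$ be a finite set of players. A game is a function $v\colon 2^N\to\mathbb{R}$ with $v(\emptyset)=0$. The hypercube graph $G=(V,E)$ has $V=2^N$ and oriented edges $E=\{(S,S\cup\{i\}) : i\in N,\ S\subset N\setminus\{i\}\}$. $\ell^2(V)$ is the space of real functions on $V$. Given $w\colon E\to(0,\infty)$, $\ell^2_w(E)$ is the space of real functions on $E$ with inner product $\langle f,g\rangle_w=\sum_{e\in E}w(e)f(e)g(e)$. $\mathrm{d}\colon \ell^2(V)\to\ell^2_w(E)$ is $\mathrm{d}u(S,S\cup\{i\}) = u(S\cup\{i\})-u(S)$, with range $\mathcal{R}(\mathrm{d})$. For $i\in N$, $\mathrm{d}_i\colon\ell^2(V)\to\ell^2_w(E)$ is defined by $\mathrm{d}_i u(S,S\cup\{j\}) = u(S\cup\{i\})-u(S)$ if $j=i$ and $0$ if $j\ne i$. $P_w$ is the $\langle\cdot,\cdot\rangle_w$-orthogonal projection of $\ell^2_w(E)$ onto $\mathcal{R}(\mathrm{d})$. For a permutation $\sigma$ of $N$, $\sigma^*$ acts on vertex functions by $(\sigma^*u)(S)=u(\sigma(S))$ and on edge functions by $(\sigma^*f)(S,S\cup\{i\}) = f(\sigma(S),\sigma(S)\cup\{\sigma(i)\})$. *)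

theory Defs
  imports "HOL-Combinatorics.Combinatorics"
begin

text \<open>Vertices V = Pow N, vertex functions 'a set => real.
  Oriented edges (S, S \<union> {i}) are encoded as pairs (S, i) with i \<in> N, S \<subseteq> N - {i}.
  Edge functions are functions on such pairs; the coboundaries below vanish off E.\<close>

definition edges :: "'a set \<Rightarrow> ('a set \<times> 'a) set" where
  "edges N = {(S, i). i \<in> N \<and> S \<subseteq> N - {i}}"

definition dV :: "'a set \<Rightarrow> ('a set \<Rightarrow> real) \<Rightarrow> ('a set \<times> 'a \<Rightarrow> real)" where
  "dV N u = (\<lambda>(S, i). if (S, i) \<in> edges N then u (insert i S) - u S else 0)"

definition dI :: "'a set \<Rightarrow> 'a \<Rightarrow> ('a set \<Rightarrow> real) \<Rightarrow> ('a set \<times> 'a \<Rightarrow> real)" where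
  "dI N i u = (\<lambda>(S, j). if (S, j) \<in> edges N \<and> j = i then u (insert i S) - u S else 0)"

definition winner :: "'a set \<Rightarrow> ('a set \<times> 'a \<Rightarrow> real) \<Rightarrow> ('a set \<times> 'a \<Rightarrow> real)
    \<Rightarrow> ('a set \<times> 'a \<Rightarrow> real) \<Rightarrow> real" where
  "winner N w f g = (\<Sum>e\<in>edges N. w e * f e * g e)"

definition rangeD :: "'a set \<Rightarrow> ('a set \<times> 'a \<Rightarrow> real) set" where
  "rangeD N = range (dV N)"

definition projW :: "'a set \<Rightarrow> ('a set \<times> 'a \<Rightarrow> real) \<Rightarrow> ('a set \<times> 'a \<Rightarrow> real)
    \<Rightarrow> ('a set \<times> 'a \<Rightarrow> real)" where
  "projW N w f = (THE g. g \<in> rangeD N \<and> (\<forall>h\<in>rangeD N. winner N w (\<lambda>e. f e - g e) h = 0))"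

definition component :: "'a set \<Rightarrow> ('a set \<times> 'a \<Rightarrow> real) \<Rightarrow> ('a set \<Rightarrow> real) \<Rightarrow> 'a
    \<Rightarrow> ('a set \<Rightarrow> real)" where
  "component N w v i = (THE u. u {} = 0 \<and> (\<forall>S. \<not> S \<subseteq> N \<longrightarrow> u S = 0)
      \<and> dV N u = projW N w (dI N i v))"

definition pullV :: "('a \<Rightarrow> 'a) \<Rightarrow> ('a set \<Rightarrow> real) \<Rightarrow> ('a set \<Rightarrow> real)" where
  "pullV \<sigma> u = (\<lambda>S. u (\<sigma> ` S))"

definition pullE :: "('a \<Rightarrow> 'a) \<Rightarrow> ('a set \<times> 'a \<Rightarrow> real) \<Rightarrow> ('a set \<times> 'a \<Rightarrow> real)" where
  "pullE \<sigma> f = (\<lambda>(S, i). f (\<sigma> ` S, \<sigma> i))"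

end

theory Submission
  imports Defs
begin

lemma finite_edges: "finite N \<Longrightarrow> finite (edges N)"
  by (rule finite_subset[of _ "Pow N \<times> N"]) (auto simp: edges_def)

lemma dV_off: "e \<notin> edges N \<Longrightarrow> dV N u e = 0"
  by (cases e) (simp add: dV_def)

lemma dV_zero: "dV N (\<lambda>_. 0) = (\<lambda>_. 0)"
  by (rule ext) (auto simp: dV_def split: prod.splits)

lemma dV_lin: "dV N (\<lambda>S. a * u S + b * u' S) = (\<lambda>e. a * dV N u e + b * dV N u' e)"
  by (rule ext) (auto simp: dV_def algebra_simps split: prod.splits)

lemma dV_diff: "dV N (\<lambda>S. u S - u' S) = (\<lambda>e. dV N u e - dV N u' e)"
  by (rule ext) (auto simp: dV_def algebra_simps split: prod.splits)

lemma dV_sum: "dV N (\<lambda>S. \<Sum>i\<in>I. u i S) = (\<lambda>e. \<Sum>i\<in>I. dV N (u i) e)"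
  by (rule ext) (auto simp: dV_def sum_subtractf split: prod.splits)

lemma dV_cong: assumes H: "\<forall>S. S \<subseteq> N \<longrightarrow> u S = u' S" shows "dV N u = dV N u'"
proof (rule ext)
  fix e :: "'a set \<times> 'a"
  obtain S i where e: "e = (S, i)" by (cases e)
  show "dV N u e = dV N u' e"
  proof (cases "(S, i) \<in> edges N")
    case True
    then have "insert i S \<subseteq> N" "S \<subseteq> N" by (auto simp: edges_def)
    then show ?thesis using H True e by (simp add: dV_def)
  qed (simp add: e dV_def)
qed

lemma dV_unique:
  assumes "finite N" "dV N u1 = dV N u2" "u1 {} = u2 {}" "S \<subseteq> N"
  shows "u1 S = u2 S"
proof -
  have "finite S" using assms(1,4) finite_subset by blast
  then show ?thesis using assms(4)
  proof (induction S rule: finite_induct)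
    case empty then show ?case using assms(3) by simp
  next
    case (insert x F)
    have e: "(F, x) \<in> edges N" using insert by (auto simp: edges_def)
    have "dV N u1 (F, x) = dV N u2 (F, x)" using assms(2) by simp
    then show ?case using e insert by (simp add: dV_def)
  qed
qed

lemma winner_lin_left: "winner N w (\<lambda>e. a * f e + b * g e) h = a * winner N w f h + b * winner N w g h"
  by (simp add: winner_def algebra_simps sum.distrib sum_distrib_left)

lemma winner_lin_right: "winner N w h (\<lambda>e. a * f e + b * g e) = a * winner N w h f + b * winner N w h g"
  by (simp add: winner_def algebra_simps sum.distrib sum_distrib_left)

lemma winner_diff_left: "winner N w (\<lambda>e. f e - g e) h = winner N w f h - winner N w g h"
  by (simp add: winner_def algebra_simps sum_subtractf)

lemma winner_zero_left: "winner N w (\<lambda>_. 0) h = 0"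
  by (simp add: winner_def)

lemma winner_zero_right: "winner N w h (\<lambda>_. 0) = 0"
  by (simp add: winner_def)

lemma winner_self_zero:
  assumes "finite N" "\<forall>e\<in>edges N. w e > 0" "winner N w d d = 0" "e \<in> edges N"
  shows "d e = 0"
proof -
  have "\<forall>x\<in>edges N. w x * d x * d x = 0"
    using assms(3) unfolding winner_def
    by (subst (asm) sum_nonneg_eq_0_iff) (use assms(1,2) finite_edges in \<open>auto simp: mult.assoc\<close>)
  then have "w e * (d e * d e) = 0" using assms(4) by (simp add: mult.assoc)
  then show ?thesis using assms(2,4) by auto
qed

lemma proj_aux:
  assumes fN: "finite N" and pos: "\<forall>e\<in>edges N. w e > 0" and fA: "finite A"
  shows "\<exists>u. (\<forall>S. S \<notin> A \<longrightarrow> u S = 0) \<and>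
     (\<forall>u'. (\<forall>S. S \<notin> A \<longrightarrow> u' S = 0) \<longrightarrow> winner N w (\<lambda>e. f e - dV N u e) (dV N u') = 0)"
  using fA
proof (induction A arbitrary: f rule: finite_induct)
  case empty
  show ?case
  proof (intro exI[of _ "\<lambda>_. 0"] conjI allI impI)
    fix u' :: "'a set \<Rightarrow> real" assume "\<forall>S. S \<notin> {} \<longrightarrow> u' S = 0"
    then have "u' = (\<lambda>_. 0)" by auto
    then show "winner N w (\<lambda>e. f e - dV N (\<lambda>_. 0) e) (dV N u') = 0"
      by (simp add: dV_zero winner_zero_right)
  qed simp
next
  case (insert T A)
  define \<delta> where "\<delta> = (\<lambda>S. if S = T then 1 else (0::real))"
  define b where "b = dV N \<delta>"
  obtain uP where uP0: "\<forall>S. S \<notin> A \<longrightarrow> uP S = 0"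
    and uP: "\<forall>u'. (\<forall>S. S \<notin> A \<longrightarrow> u' S = 0) \<longrightarrow> winner N w (\<lambda>e. b e - dV N uP e) (dV N u') = 0"
    using insert.IH[of b] by blast
  obtain uG where uG0: "\<forall>S. S \<notin> A \<longrightarrow> uG S = 0"
    and uG: "\<forall>u'. (\<forall>S. S \<notin> A \<longrightarrow> u' S = 0) \<longrightarrow> winner N w (\<lambda>e. f e - dV N uG e) (dV N u') = 0"
    using insert.IH[of f] by blast
  define \<rho> where "\<rho> = (\<lambda>S. \<delta> S - uP S)"
  define r where "r = dV N \<rho>"
  have r_eq: "r = (\<lambda>e. b e - dV N uP e)" unfolding r_def \<rho>_def b_def by (rule dV_diff)
  have rA: "\<And>u'. (\<forall>S. S \<notin> A \<longrightarrow> u' S = 0) \<Longrightarrow> winner N w r (dV N u') = 0"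
    using uP r_eq by simp
  have b_eq: "b = (\<lambda>e. 1 * dV N uP e + 1 * r e)" using r_eq by auto
  have decomp: "dV N u' = (\<lambda>e. 1 * dV N (\<lambda>S. if S = T then 0 else u' S) e + u' T * b e)" for u'
  proof -
    have "dV N u' = dV N (\<lambda>S. 1 * (if S = T then 0 else u' S) + u' T * \<delta> S)"
      by (rule arg_cong[where f="dV N"]) (auto simp: \<delta>_def fun_eq_iff)
    also have "\<dots> = (\<lambda>e. 1 * dV N (\<lambda>S. if S = T then 0 else u' S) e + u' T * b e)"
      unfolding b_def by (rule dV_lin)
    finally show ?thesis .
  qed
  have key: "\<forall>u'. (\<forall>S. S \<notin> insert T A \<longrightarrow> u' S = 0) \<longrightarrow> winner N w x (dV N u') = 0"
    if xA: "\<And>u'. (\<forall>S. S \<notin> A \<longrightarrow> u' S = 0) \<Longrightarrow> winner N w x (dV N u') = 0"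
      and xr: "winner N w x r = 0" for x
  proof (intro allI impI)
    fix u' :: "'a set \<Rightarrow> real" assume su: "\<forall>S. S \<notin> insert T A \<longrightarrow> u' S = 0"
    have s1: "winner N w x (dV N (\<lambda>S. if S = T then 0 else u' S)) = 0"
      by (rule xA) (use su in auto)
    have s2: "winner N w x b = 0"
      unfolding b_eq winner_lin_right using xA[OF uP0] xr by simp
    show "winner N w x (dV N u') = 0"
      by (subst decomp, subst winner_lin_right) (simp add: s1 s2)
  qed
  show ?case
  proof (cases "winner N w r r = 0")
    case True
    have rz: "\<forall>e\<in>edges N. r e = 0" using winner_self_zero[OF fN pos True] by blast
    have "winner N w (\<lambda>e. f e - dV N uG e) r = 0"
      unfolding winner_def using rz by simp
    then have "\<forall>u'. (\<forall>S. S \<notin> insert T A \<longrightarrow> u' S = 0) \<longrightarrow> winner N w (\<lambda>e. f e - dV N uG e) (dV N u') = 0"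
      using key uG by blast
    then show ?thesis using uG0 by (intro exI[of _ uG]) auto
  next
    case False
    define c where "c = winner N w (\<lambda>e. f e - dV N uG e) r / winner N w r r"
    define u where "u = (\<lambda>S. 1 * uG S + c * \<rho> S)"
    have du: "dV N u = (\<lambda>e. 1 * dV N uG e + c * r e)" unfolding u_def r_def by (rule dV_lin)
    have x_eq: "(\<lambda>e. f e - dV N u e) = (\<lambda>e. 1 * (f e - dV N uG e) + (- c) * r e)"
      by (auto simp: du)
    have A1: "winner N w (\<lambda>e. f e - dV N u e) (dV N u') = 0" if "\<forall>S. S \<notin> A \<longrightarrow> u' S = 0" for u'
      unfolding x_eq winner_lin_left using uG rA[OF that] that by simp
    have A2: "winner N w (\<lambda>e. f e - dV N u e) r = 0"
      unfolding x_eq winner_lin_left using False by (simp add: c_def)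
    have "\<forall>u'. (\<forall>S. S \<notin> insert T A \<longrightarrow> u' S = 0) \<longrightarrow> winner N w (\<lambda>e. f e - dV N u e) (dV N u') = 0"
      using key[OF A1 A2] by blast
    moreover have "\<forall>S. S \<notin> insert T A \<longrightarrow> u S = 0"
      using uG0 uP0 by (auto simp: u_def \<rho>_def \<delta>_def)
    ultimately show ?thesis by blast
  qed
qed

lemma proj_exists:
  assumes fN: "finite N" and pos: "\<forall>e\<in>edges N. w e > 0"
  shows "\<exists>g\<in>rangeD N. \<forall>h\<in>rangeD N. winner N w (\<lambda>e. f e - g e) h = 0"
proof -
  obtain u where u: "\<forall>u'. (\<forall>S. S \<notin> Pow N \<longrightarrow> u' S = 0) \<longrightarrow> winner N w (\<lambda>e. f e - dV N u e) (dV N u') = 0"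
    using proj_aux[OF fN pos, of "Pow N" f] fN by auto
  show ?thesis
  proof (intro bexI[of _ "dV N u"] ballI)
    fix h assume "h \<in> rangeD N"
    then obtain u' where h: "h = dV N u'" by (auto simp: rangeD_def)
    have "h = dV N (\<lambda>S. if S \<subseteq> N then u' S else 0)" unfolding h by (rule dV_cong) auto
    then show "winner N w (\<lambda>e. f e - dV N u e) h = 0" using u by auto
  qed (simp add: rangeD_def)
qed

lemma proj_unique:
  assumes fN: "finite N" and pos: "\<forall>e\<in>edges N. w e > 0"
    and g1: "g1 \<in> rangeD N" "\<forall>h\<in>rangeD N. winner N w (\<lambda>e. f e - g1 e) h = 0"
    and g2: "g2 \<in> rangeD N" "\<forall>h\<in>rangeD N. winner N w (\<lambda>e. f e - g2 e) h = 0"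
  shows "g1 = g2"
proof -
  obtain u1 where u1: "g1 = dV N u1" using g1 by (auto simp: rangeD_def)
  obtain u2 where u2: "g2 = dV N u2" using g2 by (auto simp: rangeD_def)
  define d where "d = (\<lambda>e. g1 e - g2 e)"
  have dD: "d = dV N (\<lambda>S. u1 S - u2 S)" by (simp add: d_def u1 u2 dV_diff)
  then have "d \<in> rangeD N" by (simp add: rangeD_def)
  then have "winner N w (\<lambda>e. f e - g2 e) d - winner N w (\<lambda>e. f e - g1 e) d = 0"
    using g1 g2 by simp
  then have "winner N w (\<lambda>e. (f e - g2 e) - (f e - g1 e)) d = 0"
    by (simp add: winner_diff_left)
  then have "winner N w d d = 0" by (simp add: d_def)
  then have z: "\<forall>e\<in>edges N. d e = 0" using winner_self_zero[OF fN pos] by blast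
  show ?thesis
  proof (rule ext)
    fix e show "g1 e = g2 e"
    proof (cases "e \<in> edges N")
      case True then show ?thesis using z by (simp add: d_def)
    next
      case False then show ?thesis by (simp add: u1 u2 dV_off)
    qed
  qed
qed

lemma projW_eq:
  assumes fN: "finite N" and pos: "\<forall>e\<in>edges N. w e > 0"
    and "g \<in> rangeD N" "\<forall>h\<in>rangeD N. winner N w (\<lambda>e. f e - g e) h = 0"
  shows "projW N w f = g"
  unfolding projW_def
  by (rule the_equality) (use assms proj_unique[OF fN pos] in blast)+

lemma projW_char:
  assumes fN: "finite N" and pos: "\<forall>e\<in>edges N. w e > 0"
  shows "projW N w f \<in> rangeD N \<and> (\<forall>h\<in>rangeD N. winner N w (\<lambda>e. f e - projW N w f e) h = 0)"
proof -
  obtain g where "g \<in> rangeD N" "\<forall>h\<in>rangeD N. winner N w (\<lambda>e. f e - g e) h = 0"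
    using proj_exists[OF fN pos] by blast
  moreover then have "projW N w f = g" using projW_eq[OF fN pos] by blast
  ultimately show ?thesis by simp
qed

lemma projW_lin:
  assumes fN: "finite N" and pos: "\<forall>e\<in>edges N. w e > 0"
  shows "projW N w (\<lambda>e. a * f e + b * g e) = (\<lambda>e. a * projW N w f e + b * projW N w g e)"
proof (rule projW_eq[OF fN pos])
  obtain uf where uf: "projW N w f = dV N uf" using projW_char[OF fN pos, of f] by (auto simp: rangeD_def)
  obtain ug where ug: "projW N w g = dV N ug" using projW_char[OF fN pos, of g] by (auto simp: rangeD_def)
  have "(\<lambda>e. a * projW N w f e + b * projW N w g e) = dV N (\<lambda>S. a * uf S + b * ug S)"
    by (simp add: uf ug dV_lin)
  then show "(\<lambda>e. a * projW N w f e + b * projW N w g e) \<in> rangeD N" by (simp add: rangeD_def)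
  show "\<forall>h\<in>rangeD N. winner N w (\<lambda>e. a * f e + b * g e - (a * projW N w f e + b * projW N w g e)) h = 0"
  proof
    fix h assume h: "h \<in> rangeD N"
    have "(\<lambda>e. a * f e + b * g e - (a * projW N w f e + b * projW N w g e))
        = (\<lambda>e. a * (f e - projW N w f e) + b * (g e - projW N w g e))"
      by (auto simp: algebra_simps)
    then show "winner N w (\<lambda>e. a * f e + b * g e - (a * projW N w f e + b * projW N w g e)) h = 0"
      using projW_char[OF fN pos, of f] projW_char[OF fN pos, of g] h by (simp add: winner_lin_left)
  qed
qed

lemma projW_zero:
  assumes fN: "finite N" and pos: "\<forall>e\<in>edges N. w e > 0"
  shows "projW N w (\<lambda>_. 0) = (\<lambda>_. 0)"
proof (rule projW_eq[OF fN pos])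
  show "(\<lambda>_. 0) \<in> rangeD N" using dV_zero[of N] unfolding rangeD_def by (metis rangeI)
qed (simp add: winner_zero_left)

lemma projW_range:
  assumes fN: "finite N" and pos: "\<forall>e\<in>edges N. w e > 0" and "h \<in> rangeD N"
  shows "projW N w h = h"
  by (rule projW_eq[OF fN pos]) (simp_all add: assms winner_zero_left)

lemma projW_sum:
  assumes fN: "finite N" and pos: "\<forall>e\<in>edges N. w e > 0" and fI: "finite I"
  shows "projW N w (\<lambda>e. \<Sum>i\<in>I. f i e) = (\<lambda>e. \<Sum>i\<in>I. projW N w (f i) e)"
  using fI
proof (induction I rule: finite_induct)
  case empty then show ?case using projW_zero[OF fN pos] by simp
next
  case (insert x F)
  have "projW N w (\<lambda>e. \<Sum>i\<in>insert x F. f i e) = projW N w (\<lambda>e. 1 * f x e + 1 * (\<Sum>i\<in>F. f i e))"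
    using insert by simp
  also have "\<dots> = (\<lambda>e. 1 * projW N w (f x) e + 1 * projW N w (\<lambda>e. \<Sum>i\<in>F. f i e) e)"
    by (rule projW_lin[OF fN pos])
  finally show ?case using insert by simp
qed

lemma comp_char:
  assumes fN: "finite N" and pos: "\<forall>e\<in>edges N. w e > 0"
  shows "component N w v i {} = 0 \<and> dV N (component N w v i) = projW N w (dI N i v)"
proof -
  let ?P = "\<lambda>u. u {} = 0 \<and> (\<forall>S. \<not> S \<subseteq> N \<longrightarrow> u S = 0) \<and> dV N u = projW N w (dI N i v)"
  obtain u0 where u0: "projW N w (dI N i v) = dV N u0"
    using projW_char[OF fN pos, of "dI N i v"] by (auto simp: rangeD_def)
  define u where "u = (\<lambda>S. if S \<subseteq> N then u0 S - u0 {} else 0)"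
  have "dV N u = dV N u0"
    by (rule ext) (auto simp: dV_def edges_def u_def split: prod.splits)
  then have ex: "?P u" using u0 by (simp add: u_def)
  have "\<exists>!u. ?P u"
  proof (rule ex1I[of _ u])
    show "?P u" by (rule ex)
    fix u' assume H: "?P u'"
    show "u' = u"
    proof (rule ext)
      fix S show "u' S = u S"
      proof (cases "S \<subseteq> N")
        case True then show ?thesis using dV_unique[OF fN, of u' u] H ex by auto
      next
        case False then show ?thesis using H ex by auto
      qed
    qed
  qed
  from theI'[OF this] show ?thesis unfolding component_def by blast
qed

lemma perm_edges:
  assumes "\<sigma> permutes N"
  shows "((\<sigma> ` S, \<sigma> j) \<in> edges N) = ((S, j) \<in> edges N)"
proof -
  have inj: "inj \<sigma>" using permutes_inj[OF assms] .
  have m: "\<And>x. \<sigma> x \<in> N \<longleftrightarrow> x \<in> N" using permutes_in_image[OF assms] by blast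
  show ?thesis unfolding edges_def using m inj_eq[OF inj] by auto
qed

lemma dV_pull: "\<sigma> permutes N \<Longrightarrow> dV N (pullV \<sigma> u) = pullE \<sigma> (dV N u)"
  by (rule ext) (auto simp: dV_def pullV_def pullE_def perm_edges split: prod.splits)

lemma dI_pull: "\<sigma> permutes N \<Longrightarrow> dI N i (pullV \<sigma> v) = pullE \<sigma> (dI N (\<sigma> i) v)"
  by (rule ext) (auto simp: dI_def pullV_def pullE_def perm_edges inj_eq[OF permutes_inj] split: prod.splits)

lemma winner_pull:
  assumes p: "\<sigma> permutes N"
  shows "winner N (pullE \<sigma> w) (pullE \<sigma> a) (pullE \<sigma> b) = winner N w a b"
proof -
  define h where "h = (\<lambda>(S, j). (\<sigma> ` S, \<sigma> j))"
  define h' where "h' = (\<lambda>(S, j). (inv \<sigma> ` S, inv \<sigma> j))"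
  have pi: "inv \<sigma> permutes N" using permutes_inv[OF p] .
  have inv1: "\<And>x. inv \<sigma> (\<sigma> x) = x" and inv2: "\<And>x. \<sigma> (inv \<sigma> x) = x"
    using permutes_inverses[OF p] by auto
  have bij: "bij_betw h (edges N) (edges N)"
  proof (rule bij_betw_byWitness[where f'=h'])
    show "\<forall>a\<in>edges N. h' (h a) = a" by (auto simp: h_def h'_def image_image inv1)
    show "\<forall>a\<in>edges N. h (h' a) = a" by (auto simp: h_def h'_def image_image inv2)
    show "h ` edges N \<subseteq> edges N" by (auto simp: h_def perm_edges[OF p])
    show "h' ` edges N \<subseteq> edges N" by (auto simp: h'_def perm_edges[OF pi])
  qed
  have "winner N (pullE \<sigma> w) (pullE \<sigma> a) (pullE \<sigma> b) = (\<Sum>e\<in>edges N. (\<lambda>e. w e * a e * b e) (h e))"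
    unfolding winner_def by (rule sum.cong) (auto simp: pullE_def h_def)
  also have "\<dots> = winner N w a b" unfolding winner_def by (rule sum.reindex_bij_betw[OF bij])
  finally show ?thesis .
qed

lemma proj_pull:
  assumes fN: "finite N" and pos: "\<forall>e\<in>edges N. w e > 0" and p: "\<sigma> permutes N"
  shows "projW N (pullE \<sigma> w) (pullE \<sigma> f) = pullE \<sigma> (projW N w f)"
proof -
  have pos': "\<forall>e\<in>edges N. pullE \<sigma> w e > 0"
    using pos by (auto simp: pullE_def perm_edges[OF p])
  have inv1: "\<And>x. inv \<sigma> (\<sigma> x) = x"
    using permutes_inverses[OF p] by auto
  obtain u0 where u0: "projW N w f = dV N u0" using projW_char[OF fN pos, of f] by (auto simp: rangeD_def)
  show ?thesis
  proof (rule projW_eq[OF fN pos'])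
    show "pullE \<sigma> (projW N w f) \<in> rangeD N"
      unfolding u0 dV_pull[OF p, symmetric] rangeD_def by simp
    show "\<forall>h\<in>rangeD N. winner N (pullE \<sigma> w) (\<lambda>e. pullE \<sigma> f e - pullE \<sigma> (projW N w f) e) h = 0"
    proof
      fix h assume "h \<in> rangeD N"
      then obtain u' where h: "h = dV N u'" by (auto simp: rangeD_def)
      have "pullV \<sigma> (pullV (inv \<sigma>) u') = u'"
        by (rule ext) (simp add: pullV_def image_image inv1)
      then have h2: "h = pullE \<sigma> (dV N (pullV (inv \<sigma>) u'))"
        using dV_pull[OF p, of "pullV (inv \<sigma>) u'"] h by simp
      have d: "(\<lambda>e. pullE \<sigma> f e - pullE \<sigma> (projW N w f) e) = pullE \<sigma> (\<lambda>e. f e - projW N w f e)"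
        by (rule ext) (auto simp: pullE_def split: prod.splits)
      show "winner N (pullE \<sigma> w) (\<lambda>e. pullE \<sigma> f e - pullE \<sigma> (projW N w f) e) h = 0"
        unfolding d h2 winner_pull[OF p] using projW_char[OF fN pos, of f] by (simp add: rangeD_def)
    qed
  qed
qed

lemma comp_cong:
  assumes "\<forall>e\<in>edges N. w e = w' e" "\<forall>S. S \<subseteq> N \<longrightarrow> v S = v' S"
  shows "component N w v i = component N w' v' i"
proof -
  have "winner N w = winner N w'"
    using assms(1) by (intro ext) (simp add: winner_def)
  then have 1: "projW N w = projW N w'" unfolding projW_def by simp
  have 2: "dI N i v = dI N i v'"
  proof (rule ext)
    fix e :: "'a set \<times> 'a"
    obtain S j where e: "e = (S, j)" by (cases e)
    show "dI N i v e = dI N i v' e"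
    proof (cases "(S, j) \<in> edges N")
      case True
      then have "insert j S \<subseteq> N" "S \<subseteq> N" by (auto simp: edges_def)
      then have "v (insert j S) = v' (insert j S)" "v S = v' S" using assms(2) by blast+
      then show ?thesis using True e by (auto simp: dI_def)
    qed (simp add: e dI_def)
  qed
  show ?thesis unfolding component_def 1 2 ..
qed

lemma partA:
  assumes fN: "finite N" and pos: "\<forall>e\<in>edges N. w e > 0" and v0: "v {} = 0" and S: "S \<subseteq> N"
  shows "(\<Sum>i\<in>N. component N w v i S) = v S"
proof -
  have sumdI: "(\<lambda>e. \<Sum>i\<in>N. dI N i v e) = dV N v"
  proof (rule ext)
    fix e :: "'a set \<times> 'a"
    obtain T j where e: "e = (T, j)" by (cases e)
    show "(\<Sum>i\<in>N. dI N i v e) = dV N v e"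
    proof (cases "(T, j) \<in> edges N")
      case True
      then have "j \<in> N" by (auto simp: edges_def)
      then show ?thesis using True e by (simp add: dI_def dV_def fN)
    qed (simp add: e dI_def dV_def)
  qed
  have "dV N (\<lambda>S. \<Sum>i\<in>N. component N w v i S) = (\<lambda>e. \<Sum>i\<in>N. dV N (component N w v i) e)"
    by (rule dV_sum)
  also have "\<dots> = (\<lambda>e. \<Sum>i\<in>N. projW N w (dI N i v) e)"
    using comp_char[OF fN pos] by simp
  also have "\<dots> = projW N w (\<lambda>e. \<Sum>i\<in>N. dI N i v e)"
    by (rule projW_sum[OF fN pos fN, symmetric])
  also have "\<dots> = dV N v" unfolding sumdI by (rule projW_range[OF fN pos]) (simp add: rangeD_def)
  finally have "dV N (\<lambda>S. \<Sum>i\<in>N. component N w v i S) = dV N v" .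
  moreover have "(\<Sum>i\<in>N. component N w v i {}) = v {}"
    using comp_char[OF fN pos] v0 by simp
  ultimately show ?thesis using dV_unique[OF fN _ _ S] by blast
qed

lemma partB:
  assumes fN: "finite N" and pos: "\<forall>e\<in>edges N. w e > 0" and i: "i \<in> N"
    and H: "\<forall>S. S \<subseteq> N - {i} \<longrightarrow> v (insert i S) - v S = 0" and S: "S \<subseteq> N"
  shows "component N w v i S = 0"
proof -
  have dI0: "dI N i v = (\<lambda>_. 0)"
    using H by (intro ext) (auto simp: dI_def edges_def split: prod.splits)
  have "dV N (component N w v i) = projW N w (dI N i v)"
    using comp_char[OF fN pos] by blast
  also have "\<dots> = dV N (\<lambda>_. 0)" unfolding dI0 projW_zero[OF fN pos] dV_zero ..
  finally have 1: "dV N (component N w v i) = dV N (\<lambda>_. 0)" .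
  have 2: "component N w v i {} = (\<lambda>_. 0::real) {}" using comp_char[OF fN pos] by simp
  show ?thesis using dV_unique[OF fN 1 2 S] by simp
qed

lemma partC:
  assumes fN: "finite N" and pos: "\<forall>e\<in>edges N. w e > 0" and p: "\<sigma> permutes N" and S: "S \<subseteq> N"
  shows "component N (pullE \<sigma> w) (pullV \<sigma> v) i S = pullV \<sigma> (component N w v (\<sigma> i)) S"
proof -
  have pos': "\<forall>e\<in>edges N. pullE \<sigma> w e > 0"
    using pos by (auto simp: pullE_def perm_edges[OF p])
  have "dV N (component N (pullE \<sigma> w) (pullV \<sigma> v) i) = projW N (pullE \<sigma> w) (dI N i (pullV \<sigma> v))"
    using comp_char[OF fN pos'] by blast
  also have "\<dots> = projW N (pullE \<sigma> w) (pullE \<sigma> (dI N (\<sigma> i) v))" by (simp add: dI_pull[OF p])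
  also have "\<dots> = pullE \<sigma> (projW N w (dI N (\<sigma> i) v))" by (rule proj_pull[OF fN pos p])
  also have "\<dots> = pullE \<sigma> (dV N (component N w v (\<sigma> i)))" using comp_char[OF fN pos] by simp
  also have "\<dots> = dV N (pullV \<sigma> (component N w v (\<sigma> i)))" by (simp add: dV_pull[OF p])
  finally have 1: "dV N (component N (pullE \<sigma> w) (pullV \<sigma> v) i) = dV N (pullV \<sigma> (component N w v (\<sigma> i)))" .
  have 2: "component N (pullE \<sigma> w) (pullV \<sigma> v) i {} = pullV \<sigma> (component N w v (\<sigma> i)) {}"
    using comp_char[OF fN pos] comp_char[OF fN pos'] by (simp add: pullV_def)
  show ?thesis using dV_unique[OF fN 1 2 S] .
qed

lemma partD:
  assumes fN: "finite N" and pos: "\<forall>e\<in>edges N. w e > 0" and S: "S \<subseteq> N"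
  shows "component N w (\<lambda>S. \<alpha> * v S + \<alpha>' * v' S) i S
             = \<alpha> * component N w v i S + \<alpha>' * component N w v' i S"
proof -
  have dI: "dI N i (\<lambda>S. \<alpha> * v S + \<alpha>' * v' S) = (\<lambda>e. \<alpha> * dI N i v e + \<alpha>' * dI N i v' e)"
    by (rule ext) (auto simp: dI_def algebra_simps split: prod.splits)
  have 1: "dV N (component N w (\<lambda>S. \<alpha> * v S + \<alpha>' * v' S) i)
     = dV N (\<lambda>S. \<alpha> * component N w v i S + \<alpha>' * component N w v' i S)"
    using comp_char[OF fN pos] by (simp add: dV_lin dI projW_lin[OF fN pos])
  have 2: "component N w (\<lambda>S. \<alpha> * v S + \<alpha>' * v' S) i {} = \<alpha> * component N w v i {} + \<alpha>' * component N w v' i {}"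
    using comp_char[OF fN pos] by simp
  show ?thesis using dV_unique[OF fN 1 _ S] 2 by simp
qed

theorem theorem4p1:
  fixes N :: "'a set" and w :: "'a set \<times> 'a \<Rightarrow> real" and v :: "'a set \<Rightarrow> real"
  assumes "finite N"
    and "\<forall>e\<in>edges N. w e > 0"
    and "v {} = 0"
  shows "(\<forall>S. S \<subseteq> N \<longrightarrow> (\<Sum>i\<in>N. component N w v i S) = v S)
    \<and> (\<forall>i\<in>N. (\<forall>S. S \<subseteq> N - {i} \<longrightarrow> v (insert i S) - v S = 0)
           \<longrightarrow> (\<forall>S. S \<subseteq> N \<longrightarrow> component N w v i S = 0))
    \<and> (\<forall>\<sigma>. \<sigma> permutes N \<longrightarrow> (\<forall>i\<in>N. \<forall>S. S \<subseteq> N \<longrightarrow>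
           component N (pullE \<sigma> w) (pullV \<sigma> v) i S = pullV \<sigma> (component N w v (\<sigma> i)) S))
    \<and> (\<forall>i\<in>N. \<forall>j\<in>N. (\<forall>S. S \<subseteq> N \<longrightarrow> pullV (transpose i j) v S = v S)
           \<and> (\<forall>e\<in>edges N. pullE (transpose i j) w e = w e)
           \<longrightarrow> (\<forall>S. S \<subseteq> N \<longrightarrow> component N w v i S = pullV (transpose i j) (component N w v j) S))
    \<and> (\<forall>v' (\<alpha>::real) (\<alpha>'::real). v' {} = 0 \<longrightarrow> (\<forall>i\<in>N. \<forall>S. S \<subseteq> N \<longrightarrow>
           component N w (\<lambda>S. \<alpha> * v S + \<alpha>' * v' S) i S
             = \<alpha> * component N w v i S + \<alpha>' * component N w v' i S))"
proof (intro conjI)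
  show "\<forall>S. S \<subseteq> N \<longrightarrow> (\<Sum>i\<in>N. component N w v i S) = v S"
    by (intro allI impI, rule partA, (rule assms)+)
  show "\<forall>i\<in>N. (\<forall>S. S \<subseteq> N - {i} \<longrightarrow> v (insert i S) - v S = 0)
           \<longrightarrow> (\<forall>S. S \<subseteq> N \<longrightarrow> component N w v i S = 0)"
    using partB[OF assms(1,2)] by blast
  show "\<forall>\<sigma>. \<sigma> permutes N \<longrightarrow> (\<forall>i\<in>N. \<forall>S. S \<subseteq> N \<longrightarrow>
           component N (pullE \<sigma> w) (pullV \<sigma> v) i S = pullV \<sigma> (component N w v (\<sigma> i)) S)"
    using partC[OF assms(1,2)] by blast
  show "\<forall>i\<in>N. \<forall>j\<in>N. (\<forall>S. S \<subseteq> N \<longrightarrow> pullV (transpose i j) v S = v S)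
           \<and> (\<forall>e\<in>edges N. pullE (transpose i j) w e = w e)
           \<longrightarrow> (\<forall>S. S \<subseteq> N \<longrightarrow> component N w v i S = pullV (transpose i j) (component N w v j) S)"
  proof (intro ballI impI allI)
    fix i j S assume ij: "i \<in> N" "j \<in> N"
      and H: "(\<forall>S. S \<subseteq> N \<longrightarrow> pullV (transpose i j) v S = v S) \<and> (\<forall>e\<in>edges N. pullE (transpose i j) w e = w e)"
      and S: "S \<subseteq> N"
    have p: "transpose i j permutes N" by (rule permutes_swap_id[OF ij])
    have "component N w v i = component N (pullE (transpose i j) w) (pullV (transpose i j) v) i"
      using H by (intro comp_cong) auto
    then show "component N w v i S = pullV (transpose i j) (component N w v j) S"
      using partC[OF assms(1,2) p S, of v i] by simp
  qed
  show "\<forall>v' (\<alpha>::real) (\<alpha>'::real). v' {} = 0 \<longrightarrow> (\<forall>i\<in>N. \<forall>S. S \<subseteq> N \<longrightarrow>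
           component N w (\<lambda>S. \<alpha> * v S + \<alpha>' * v' S) i S
             = \<alpha> * component N w v i S + \<alpha>' * component N w v' i S)"
    using partD[OF assms(1,2)] by blast
qed

end
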